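(* For all integers $t\ge0$ and $k\ge0$, \[\kappa_2(2^{k+1}t+2^k-1)=\frac{(2^k+1)\kappa_2(t)}{2^{k+1}}+\frac{(2^k-1)\kappa_2(t+1)}{2^{k+1}}+\frac{3(2^k-1)}{2^k},\] and \[D(2^{k+1}t+2^k-1)=\frac{2^k+1}{2^{k+1}}D(t)+\frac{2^k-1}{2^{k+1}}D(t+1)+\Bigl(\frac12+\frac{k-1}{2^{k+1}}\Bigr)\bigl(\kappa_2(t+1)-\kappa_2(t)\bigr)+1+\frac{3k-1}{2^k}.\]
   Context: $s(n)$ is the number of $1$s in the binary expansion of $n\ge0$; $\delta(j,t)=\lim_{N\to\infty}\frac1N|\{0\le n<N: s(n+t)-s(n)=j\}|$ for $j\in\mathbb Z$, a probability distribution on $\mathbb Z$, and $\kappa_j(t)$ denotes its $j$-th cumulant ($\log\sum_k\delta(k,t)e^{2\pi ik\vartheta}=\sum_{j\ge0}\frac{\kappa_j(t)}{j!}(2\pi i\vartheta)^j$ near $\vartheta=0$). Set $D(t)=\kappa_2(t)-\kappa_3(t)/3$. *)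

theory Defs
  imports "HOL-Complex_Analysis.Complex_Analysis"
begin

fun s :: "nat \<Rightarrow> nat" where
  "s n = (if n = 0 then 0 else n mod 2 + s (n div 2))"

definition delta :: "int \<Rightarrow> nat \<Rightarrow> real" where
  "delta j t = lim (\<lambda>N. real (card {n. n < N \<and> int (s (n + t)) - int (s n) = j}) / real N)"

definition charf :: "nat \<Rightarrow> complex \<Rightarrow> complex" where
  "charf t z = (\<Sum>\<^sub>\<infinity>k\<in>(UNIV::int set). complex_of_real (delta k t) * exp (2 * pi * \<i> * of_int k * z))"

text \<open>j-th cumulant: the Taylor coefficients of log charf at 0 in powers of 2 pi i z, times j!.\<close>
definition kappa :: "nat \<Rightarrow> nat \<Rightarrow> complex" where
  "kappa j t = (deriv ^^ j) (\<lambda>z. Ln (charf t z)) 0 / (2 * pi * \<i>) ^ j"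

definition D :: "nat \<Rightarrow> complex" where
  "D t = kappa 2 t - kappa 3 t / 3"

end

theory Submission
  imports Defs "HOL-Real_Asymp.Real_Asymp"
begin


declare s.simps[simp del]

lemma s_0[simp]: "s 0 = 0" by (simp add: s.simps)
lemma s_even: "s (2*m) = s m"
  by (cases "m = 0") (simp_all add: s.simps[of "2*m"])
lemma s_odd: "s (2*m+1) = s m + 1"
proof -
  show ?thesis by (subst s.simps) simp
qed
lemma s_odd': "s (Suc (2*m)) = Suc (s m)" using s_odd[of m] by simp

lemma s_Suc_le: "s (Suc n) \<le> s n + 1"
proof (induction n rule: less_induct)
  case (less n)
  show ?case
  proof (cases "even n")
    case True then obtain m where "n = 2*m" by blast
    then show ?thesis using s_odd[of m] s_even[of m] by simp
  next
    case False then obtain m where m: "n = 2*m+1" by (metis oddE)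
    have "Suc n = 2*(Suc m)" using m by simp
    hence "s (Suc n) = s (Suc m)" using s_even by metis
    moreover have "s (Suc m) \<le> s m + 1" using less m by simp
    ultimately show ?thesis using m s_odd[of m] by simp
  qed
qed

definition cnt :: "int \<Rightarrow> nat \<Rightarrow> nat \<Rightarrow> nat" where
  "cnt j t N = card {n. n < N \<and> int (s (n + t)) - int (s n) = j}"

lemma card_less_Suc: "card {n::nat. n < Suc N \<and> P n} = card {n. n < N \<and> P n} + (if P N then 1 else 0)"
proof -
  have "{n. n < Suc N \<and> P n} = {n. n < N \<and> P n} \<union> (if P N then {N} else {})"
    by (auto simp: less_Suc_eq)
  thus ?thesis by (auto simp: card_insert_if)
qed

lemma card_split: "card {n::nat. n < 2*N \<and> P n} = card {m. m < N \<and> P (2*m)} + card {m. m < N \<and> P (2*m+1)}"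
proof (induction N)
  case 0 then show ?case by simp
next
  case (Suc N)
  have "2 * Suc N = Suc (Suc (2*N))" by simp
  then show ?case using Suc by (simp only: card_less_Suc) simp
qed

lemma cnt_Suc: "cnt j t (Suc N) = cnt j t N + (if int (s (N + t)) - int (s N) = j then 1 else 0)"
  unfolding cnt_def by (rule card_less_Suc)

lemma cnt_0t[simp]: "cnt j t 0 = 0" by (simp add: cnt_def)

lemma cnt_zero: "cnt j 0 N = (if j = 0 then N else 0)"
proof (induction N)
  case (Suc N) thus ?case by (auto simp: cnt_Suc)
qed simp

lemma cnt_even: "cnt j (2*u) (2*N) = 2 * cnt j u N"
proof -
  have "cnt j (2*u) (2*N) = card {m. m < N \<and> int (s (2*m + 2*u)) - int (s (2*m)) = j}
      + card {m. m < N \<and> int (s (2*m+1 + 2*u)) - int (s (2*m+1)) = j}"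
    unfolding cnt_def by (rule card_split)
  also have "{m. m < N \<and> int (s (2*m + 2*u)) - int (s (2*m)) = j} = {m. m < N \<and> int (s (m + u)) - int (s m) = j}"
  proof -
    have "\<And>m. 2*m+2*u = 2*(m+u)" by simp
    thus ?thesis by (simp only: s_even)
  qed
  also have "{m. m < N \<and> int (s (2*m+1 + 2*u)) - int (s (2*m+1)) = j} = {m. m < N \<and> int (s (m + u)) - int (s m) = j}"
  proof -
    have "\<And>m. 2*m+1+2*u = 2*(m+u)+1" by simp
    thus ?thesis by (simp only: s_odd s_even) simp
  qed
  finally show ?thesis unfolding cnt_def by simp
qed

lemma cnt_odd: "cnt j (2*u+1) (2*N) = cnt (j-1) u N + cnt (j+1) (u+1) N"
proof -
  have "cnt j (2*u+1) (2*N) = card {m. m < N \<and> int (s (2*m + (2*u+1))) - int (s (2*m)) = j}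
      + card {m. m < N \<and> int (s (2*m+1 + (2*u+1))) - int (s (2*m+1)) = j}"
    unfolding cnt_def by (rule card_split)
  also have "{m. m < N \<and> int (s (2*m + (2*u+1))) - int (s (2*m)) = j} = {m. m < N \<and> int (s (m + u)) - int (s m) = j - 1}"
  proof -
    have "\<And>m. 2*m+(2*u+1) = 2*(m+u)+1" by simp
    thus ?thesis by (simp only: s_odd s_even) auto
  qed
  also have "{m. m < N \<and> int (s (2*m+1 + (2*u+1))) - int (s (2*m+1)) = j} = {m. m < N \<and> int (s (m + (u+1))) - int (s m) = j + 1}"
  proof -
    have "\<And>m. 2*m+1+(2*u+1) = 2*(m+(u+1))" by simp
    thus ?thesis by (simp only: s_odd s_even) auto
  qed
  finally show ?thesis unfolding cnt_def by simp
qed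

lemma cnt_one_big: "j \<ge> 2 \<Longrightarrow> cnt j 1 N = 0"
proof -
  have "{n. n < N \<and> int (s (n + 1)) - int (s n) = j} = {}" if "j \<ge> 2"
    using s_Suc_le that by (auto, smt (verit, ccfv_SIG) Suc_eq_plus1 of_nat_Suc of_nat_mono)
  thus "j \<ge> 2 \<Longrightarrow> cnt j 1 N = 0" unfolding cnt_def by simp
qed



lemma cnt_one_big': "j \<ge> 2 \<Longrightarrow> cnt j (Suc 0) N = 0" using cnt_one_big by simp

lemma seq_even_odd:
  fixes X :: "nat \<Rightarrow> real"
  assumes "(\<lambda>n. X (2*n)) \<longlonglongrightarrow> L" "(\<lambda>n. X (2*n+1)) \<longlonglongrightarrow> L"
  shows "X \<longlonglongrightarrow> L"
  unfolding tendsto_def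
proof (intro allI impI)
  fix S :: "real set" assume S: "open S" "L \<in> S"
  from assms(1) S obtain M1 where M1: "\<forall>n\<ge>M1. X (2*n) \<in> S"
    unfolding tendsto_def eventually_sequentially by blast
  from assms(2) S obtain M2 where M2: "\<forall>n\<ge>M2. X (2*n+1) \<in> S"
    unfolding tendsto_def eventually_sequentially by blast
  show "eventually (\<lambda>n. X n \<in> S) sequentially"
    unfolding eventually_sequentially
  proof (intro exI allI impI)
    fix n assume n: "2*(M1+M2) \<le> n"
    show "X n \<in> S"
    proof (cases "even n")
      case True then obtain m where m: "n = 2*m" by blast
      thus ?thesis using M1 n by auto
    next
      case False then obtain m where m: "n = 2*m+1" by (metis oddE)
      thus ?thesis using M2 n by auto
    qed
  qed
qed

lemma lim_double:
  fixes a :: "nat \<Rightarrow> nat"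
  assumes mono: "\<And>N. a N \<le> a (Suc N)" and inc: "\<And>N. a (Suc N) \<le> a N + 1"
    and ev: "(\<lambda>N. real (a (2*N)) / real (2*N)) \<longlonglongrightarrow> L"
  shows "(\<lambda>N. real (a N) / real N) \<longlonglongrightarrow> L"
proof (rule seq_even_odd[OF ev])
  have r1: "(\<lambda>N. real (2*N) / real (2*N+1)) \<longlonglongrightarrow> 1" by real_asymp
  have r2: "(\<lambda>N. 1 / real (2*N+1)) \<longlonglongrightarrow> 0" by real_asymp
  have lo: "(\<lambda>N. real (a (2*N)) / real (2*N) * (real (2*N) / real (2*N+1))) \<longlonglongrightarrow> L"
    using tendsto_mult[OF ev r1] by simp
  have hi: "(\<lambda>N. real (a (2*N)) / real (2*N) * (real (2*N) / real (2*N+1)) + 1 / real (2*N+1)) \<longlonglongrightarrow> L"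
    using tendsto_add[OF tendsto_mult[OF ev r1] r2] by simp
  show "(\<lambda>N. real (a (2*N+1)) / real (2*N+1)) \<longlonglongrightarrow> L"
  proof (rule tendsto_sandwich[OF _ _ lo hi])
    show "eventually (\<lambda>N. real (a (2*N)) / real (2*N) * (real (2*N) / real (2*N+1)) \<le> real (a (2*N+1)) / real (2*N+1)) sequentially"
      unfolding eventually_sequentially
    proof (intro exI[of _ 1] allI impI)
      fix N :: nat assume "1 \<le> N"
      have "a (2*N) \<le> a (2*N+1)" using mono[of "2*N"] by simp
      thus "real (a (2*N)) / real (2*N) * (real (2*N) / real (2*N+1)) \<le> real (a (2*N+1)) / real (2*N+1)"
        using \<open>1 \<le> N\<close> by (simp add: divide_right_mono)
    qed
    show "eventually (\<lambda>N. real (a (2*N+1)) / real (2*N+1) \<le> real (a (2*N)) / real (2*N) * (real (2*N) / real (2*N+1)) + 1 / real (2*N+1)) sequentially"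
      unfolding eventually_sequentially
    proof (intro exI[of _ 1] allI impI)
      fix N :: nat assume "1 \<le> N"
      have "a (2*N+1) \<le> a (2*N) + 1" using inc[of "2*N"] by simp
      hence "real (a (2*N+1)) \<le> real (a (2*N)) + 1" by linarith
      hence "real (a (2*N+1)) / real (2*N+1) \<le> (real (a (2*N)) + 1) / real (2*N+1)"
        by (simp add: divide_right_mono)
      also have "\<dots> = real (a (2*N)) / real (2*N) * (real (2*N) / real (2*N+1)) + 1 / real (2*N+1)"
        using \<open>1 \<le> N\<close> by (simp add: field_simps)
      finally show "real (a (2*N+1)) / real (2*N+1) \<le> real (a (2*N)) / real (2*N) * (real (2*N) / real (2*N+1)) + 1 / real (2*N+1)" .
    qed
  qed
qed

lemma cnt_mono: "cnt j t N \<le> cnt j t (Suc N)" and cnt_inc: "cnt j t (Suc N) \<le> cnt j t N + 1"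
  by (simp_all add: cnt_Suc)

lemma combine:
  assumes eq: "\<And>N. cnt j t (2*N) = cnt a u N + cnt b v N"
    and la: "(\<lambda>N. real (cnt a u N) / real N) \<longlonglongrightarrow> La"
    and lb: "(\<lambda>N. real (cnt b v N) / real N) \<longlonglongrightarrow> Lb"
  shows "(\<lambda>N. real (cnt j t N) / real N) \<longlonglongrightarrow> (La + Lb) / 2"
proof (rule lim_double[where a="cnt j t"])
  show "cnt j t N \<le> cnt j t (Suc N)" "cnt j t (Suc N) \<le> cnt j t N + 1" for N by (rule cnt_mono cnt_inc)+
  have "(\<lambda>N. (real (cnt a u N) / real N + real (cnt b v N) / real N) / 2) \<longlonglongrightarrow> (La + Lb) / 2"
    by (intro tendsto_intros la lb) simp
  moreover have "(real (cnt a u N) / real N + real (cnt b v N) / real N) / 2 = real (cnt j t (2*N)) / real (2*N)" for N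
  proof -
    have "real (cnt j t (2*N)) = real (cnt a u N) + real (cnt b v N)" by (simp only: eq of_nat_add)
    moreover have "real (2*N) = 2 * real N" by simp
    ultimately show ?thesis by (simp add: add_divide_distrib)
  qed
  ultimately show "(\<lambda>N. real (cnt j t (2*N)) / real (2*N)) \<longlonglongrightarrow> (La + Lb) / 2" by simp
qed

lemma conv0: "(\<lambda>N. real (cnt j 0 N) / real N) \<longlonglongrightarrow> (if j = 0 then 1 else 0)"
proof (rule Lim_transform_eventually[OF tendsto_const])
  show "eventually (\<lambda>N. (if j = 0 then 1 else 0) = real (cnt j 0 N) / real N) sequentially"
    unfolding eventually_sequentially by (intro exI[of _ 1]) (auto simp: cnt_zero)
qed

lemma conv1: "\<exists>L. (\<lambda>N. real (cnt (1 - int m) 1 N) / real N) \<longlonglongrightarrow> L"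
proof (induction m)
  case 0
  have "(\<lambda>N. real (cnt 1 1 N) / real N) \<longlonglongrightarrow> (1 + 0) / 2"
  proof (rule combine[OF _ conv0[of 0, simplified]])
    show "cnt 1 1 (2*N) = cnt 0 0 N + cnt 2 1 N" for N using cnt_odd[of 1 0 N] by simp
    show "(\<lambda>N. real (cnt 2 1 N) / real N) \<longlonglongrightarrow> 0" by (simp add: cnt_one_big cnt_one_big')
  qed
  thus ?case by auto
next
  case (Suc m)
  then obtain L where L: "(\<lambda>N. real (cnt (1 - int m) 1 N) / real N) \<longlonglongrightarrow> L" by blast
  have c0: "(\<lambda>N. real (cnt (- int (Suc m)) 0 N) / real N) \<longlonglongrightarrow> 0"
    using conv0[of "- int (Suc m)"] by simp
  have "(\<lambda>N. real (cnt (1 - int (Suc m)) 1 N) / real N) \<longlonglongrightarrow> (0 + L) / 2"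
  proof (rule combine[OF _ c0 L])
    show "cnt (1 - int (Suc m)) 1 (2*N) = cnt (- int (Suc m)) 0 N + cnt (1 - int m) 1 N" for N
    proof -
      have e1: "1 - int (Suc m) - 1 = - int (Suc m)" by simp
      have e2: "1 - int (Suc m) + 1 = 1 - int m" by simp
      show ?thesis using cnt_odd[of "1 - int (Suc m)" 0 N] unfolding e1 e2 by simp
    qed
  qed
  thus ?case by auto
qed

lemma conv_ex: "\<exists>L. (\<lambda>N. real (cnt j t N) / real N) \<longlonglongrightarrow> L"
proof (induction t arbitrary: j rule: less_induct)
  case (less t)
  show ?case
  proof (cases "t = 0")
    case True thus ?thesis using conv0 by blast
  next
    case t0: False
    show ?thesis
    proof (cases "t = 1")
      case True
      show ?thesis
      proof (cases "j \<ge> 2")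
        case True thus ?thesis using \<open>t = 1\<close> by (auto simp: cnt_one_big cnt_one_big')
      next
        case False
        then have "j = 1 - int (nat (1 - j))" by simp
        thus ?thesis using conv1 \<open>t = 1\<close> by metis
      qed
    next
      case t1: False
      show ?thesis
      proof (cases "even t")
        case True then obtain u where u: "t = 2*u" by blast
        with t0 have "u < t" by simp
        then obtain L where L: "(\<lambda>N. real (cnt j u N) / real N) \<longlonglongrightarrow> L" using less by blast
        have "(\<lambda>N. real (cnt j t N) / real N) \<longlonglongrightarrow> (L + L) / 2"
          by (rule combine[OF _ L L]) (simp add: u cnt_even)
        thus ?thesis by blast
      next
        case False then obtain u where u: "t = 2*u+1" by (metis oddE)
        with t1 have "u < t" "u+1 < t" by auto
        then obtain L1 L2 where L1: "(\<lambda>N. real (cnt (j-1) u N) / real N) \<longlonglongrightarrow> L1"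
          and L2: "(\<lambda>N. real (cnt (j+1) (u+1) N) / real N) \<longlonglongrightarrow> L2" using less by blast
        have "(\<lambda>N. real (cnt j t N) / real N) \<longlonglongrightarrow> (L1 + L2) / 2"
          by (rule combine[OF _ L1 L2]) (unfold u, rule cnt_odd)
        thus ?thesis by blast
      qed
    qed
  qed
qed

lemma delta_cnt: "delta j t = lim (\<lambda>N. real (cnt j t N) / real N)"
  by (simp add: delta_def cnt_def)

lemma delta_tendsto: "(\<lambda>N. real (cnt j t N) / real N) \<longlonglongrightarrow> delta j t"
  using conv_ex[of j t] by (auto simp: delta_cnt limI)

lemma delta_even: "delta j (2*u) = delta j u"
proof -
  have "(\<lambda>N. real (cnt j (2*u) N) / real N) \<longlonglongrightarrow> (delta j u + delta j u) / 2"
    by (rule combine[OF _ delta_tendsto delta_tendsto]) (simp add: cnt_even)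
  from LIMSEQ_unique[OF delta_tendsto this] show ?thesis by simp
qed

lemma delta_odd: "delta j (2*u+1) = (delta (j-1) u + delta (j+1) (u+1)) / 2"
proof -
  have "(\<lambda>N. real (cnt j (2*u+1) N) / real N) \<longlonglongrightarrow> (delta (j-1) u + delta (j+1) (u+1)) / 2"
    by (rule combine[OF _ delta_tendsto delta_tendsto]) (rule cnt_odd)
  from LIMSEQ_unique[OF delta_tendsto this] show ?thesis by simp
qed

lemma delta_zero: "delta j 0 = (if j = 0 then 1 else 0)"
  using LIMSEQ_unique[OF delta_tendsto conv0] .

lemma delta_nonneg: "delta j t \<ge> 0"
  by (rule LIMSEQ_le_const[OF delta_tendsto]) auto

lemma delta_one_big: "j \<ge> 2 \<Longrightarrow> delta j 1 = 0"
  using LIMSEQ_unique[OF delta_tendsto[of j 1]] by (simp add: cnt_one_big cnt_one_big')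



lemma delta_one_rec: "delta j 1 = ((if j = 1 then 1 else 0) + delta (j+1) 1) / 2"
  using delta_odd[of j 0] delta_zero[of "j-1"] by simp

lemma delta_one_val: "delta (1 - int m) 1 = 1 / 2^(m+1)"
proof (induction m)
  case 0
  show ?case using delta_one_rec[of 1] delta_one_big[of 2] by simp
next
  case (Suc m)
  have "delta (1 - int (Suc m)) 1 = (0 + delta (1 - int m) 1) / 2"
    using delta_one_rec[of "1 - int (Suc m)"] by simp
  thus ?case using Suc by simp
qed

lemma delta_big: "j > int t \<Longrightarrow> delta j t = 0"
proof (induction t arbitrary: j rule: less_induct)
  case (less t)
  show ?case
  proof (cases "t = 0")
    case True thus ?thesis using less.prems by (simp add: delta_zero)
  next
    case t0: False
    show ?thesis
    proof (cases "t = 1")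
      case True thus ?thesis using less.prems delta_one_big by simp
    next
      case t1: False
      show ?thesis
      proof (cases "even t")
        case True then obtain u where u: "t = 2*u" by blast
        with t0 have "u < t" by simp
        thus ?thesis using less u by (simp add: delta_even)
      next
        case False then obtain u where u: "t = 2*u+1" by (metis oddE)
        with t1 have "u < t" "u+1 < t" by auto
        moreover have "j - 1 > int u" "j + 1 > int (u+1)" using less.prems u by auto
        ultimately have "delta (j-1) u = 0" "delta (j+1) (u+1) = 0" using less.IH by auto
        moreover have "delta j t = (delta (j-1) u + delta (j+1) (u+1)) / 2" using u delta_odd by simp
        ultimately show ?thesis by simp
      qed
    qed
  qed
qed

lemma delta_bound: "\<exists>A\<ge>0. \<forall>j. delta j t \<le> A * 2 powr (of_int j)"
proof (induction t rule: less_induct)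
  case (less t)
  show ?case
  proof (cases "t = 0")
    case True
    show ?thesis
      by (rule exI[of _ 1]) (auto simp: True delta_zero)
  next
    case t0: False
    show ?thesis
    proof (cases "t = 1")
      case True
      have "delta j 1 \<le> 1 * 2 powr (of_int j)" for j
      proof (cases "j \<ge> 2")
        case True thus ?thesis using delta_one_big by simp
      next
        case False
        define m where "m = nat (1 - j)"
        have m: "j = 1 - int m" using False by (simp add: m_def)
        have "delta j 1 = 1 / 2^(m+1)" using m delta_one_val by simp
        also have "\<dots> \<le> 2 powr (1 - real m)"
          by (simp add: powr_diff powr_realpow field_simps)
        finally show ?thesis using m by simp
      qed
      thus ?thesis using True by (intro exI[of _ 1]) auto
    next
      case t1: False
      show ?thesis
      proof (cases "even t")
        case True then obtain u where u: "t = 2*u" by blast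
        with t0 have "u < t" by simp
        thus ?thesis using less u by (simp add: delta_even)
      next
        case False then obtain u where u: "t = 2*u+1" by (metis oddE)
        with t1 have "u < t" "u+1 < t" by auto
        then obtain A B where A: "A \<ge> 0" "\<forall>j. delta j u \<le> A * 2 powr (of_int j)"
          and B: "B \<ge> 0" "\<forall>j. delta j (u+1) \<le> B * 2 powr (of_int j)" using less by meson
        have "delta j t \<le> (A + B) * 2 powr (of_int j)" for j
        proof -
          have "delta j t = (delta (j-1) u + delta (j+1) (u+1)) / 2" using u delta_odd by simp
          also have "\<dots> \<le> (A * 2 powr (of_int (j-1)) + B * 2 powr (of_int (j+1))) / 2"
            using A(2)[rule_format, of "j-1"] B(2)[rule_format, of "j+1"] by (intro divide_right_mono add_mono) auto
          also have "\<dots> = (A / 4 + B) * 2 powr (of_int j)"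
            by (simp add: powr_diff powr_add field_simps)
          also have "\<dots> \<le> (A + B) * 2 powr (of_int j)"
            using A by (intro mult_right_mono) auto
          finally show ?thesis .
        qed
        thus ?thesis using A B by (intro exI[of _ "A+B"]) auto
      qed
    qed
  qed
qed




definition r0 :: real where "r0 = ln 2 / (4*pi)"

lemma r0_pos: "r0 > 0" by (simp add: r0_def)

lemma norm_exp_bound:
  assumes z: "z \<in> ball 0 r0"
  shows "norm (exp (2 * pi * \<i> * of_int k * z)) \<le> 2 powr (\<bar>real_of_int k\<bar> / 2)"
proof -
  have iz: "\<bar>Im z\<bar> \<le> r0" using z abs_Im_le_cmod[of z] by (simp add: dist_norm)
  have re: "Re (2 * pi * \<i> * of_int k * z) = - 2 * pi * real_of_int k * Im z" by simp
  have "- 2 * pi * real_of_int k * Im z \<le> 2 * pi * \<bar>real_of_int k\<bar> * \<bar>Im z\<bar>"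
  proof -
    have "- (real_of_int k * Im z) \<le> \<bar>real_of_int k\<bar> * \<bar>Im z\<bar>"
      by (metis abs_ge_minus_self abs_mult)
    hence "2 * pi * (- (real_of_int k * Im z)) \<le> 2 * pi * (\<bar>real_of_int k\<bar> * \<bar>Im z\<bar>)"
      using pi_gt_zero by (intro mult_left_mono) auto
    thus ?thesis by (simp add: algebra_simps)
  qed
  also have "\<dots> \<le> 2 * pi * \<bar>real_of_int k\<bar> * r0"
    using iz pi_gt_zero by (intro mult_left_mono) auto
  also have "\<dots> = \<bar>real_of_int k\<bar> / 2 * ln 2" by (simp add: r0_def field_simps)
  finally have "Re (2 * pi * \<i> * of_int k * z) \<le> \<bar>real_of_int k\<bar> / 2 * ln 2" using re by simp
  hence "exp (Re (2 * pi * \<i> * of_int k * z)) \<le> exp (\<bar>real_of_int k\<bar> / 2 * ln 2)" by simp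
  thus ?thesis by (simp add: powr_def)
qed

definition ff :: "nat \<Rightarrow> complex \<Rightarrow> int \<Rightarrow> complex" where
  "ff t z k = complex_of_real (delta k t) * exp (2 * pi * \<i> * of_int k * z)"

lemma charf_ff: "charf t z = infsum (ff t z) UNIV"
proof -
  have "ff t z = (\<lambda>k. complex_of_real (delta k t) * exp (2 * pi * \<i> * of_int k * z))"
    by (rule ext) (simp add: ff_def)
  thus ?thesis by (simp add: charf_def)
qed

definition gg :: "nat \<Rightarrow> complex \<Rightarrow> nat \<Rightarrow> complex" where
  "gg t z n = ff t z (int t - int n)"

lemma gg_bound:
  assumes z: "z \<in> ball 0 r0" and A: "A \<ge> 0" "\<forall>j. delta j t \<le> A * 2 powr (of_int j)"
  shows "norm (gg t z n) \<le> A * 2 powr (3 * real t / 2) * (2 powr (-1/2)) ^ n"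
proof -
  let ?k = "int t - int n"
  have "norm (gg t z n) = delta ?k t * norm (exp (2 * pi * \<i> * of_int ?k * z))"
    by (simp add: gg_def ff_def norm_mult delta_nonneg)
  also have "\<dots> \<le> (A * 2 powr (of_int ?k)) * 2 powr (\<bar>real_of_int ?k\<bar> / 2)"
    using A(2)[rule_format, of ?k] norm_exp_bound[OF z, of ?k] delta_nonneg[of ?k t] A(1)
    by (intro mult_mono) simp_all
  also have "\<dots> = A * 2 powr (of_int ?k + \<bar>real_of_int ?k\<bar> / 2)"
    by (simp add: powr_add)
  also have "\<dots> \<le> A * 2 powr (3 * real t / 2 - real n / 2)"
  proof -
    have "real_of_int ?k + \<bar>real_of_int ?k\<bar> / 2 \<le> 3 * real t / 2 - real n / 2"
    proof -
      have e: "real_of_int ?k = real t - real n" by simp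
      have "real t - real n + \<bar>real t - real n\<bar> / 2 \<le> 3 * real t / 2 - real n / 2"
        by (cases "real n \<le> real t") (simp_all add: abs_if field_simps)
      thus ?thesis unfolding e .
    qed
    thus ?thesis using A(1) by (intro mult_left_mono powr_mono) simp_all
  qed
  also have "2 powr (3 * real t / 2 - real n / 2) = 2 powr (3 * real t / 2) * (2 powr (-1/2)) ^ n"
  proof -
    have "(2 powr (-1/2::real)) ^ n = (2 powr (-1/2)) powr (real n)"
      by (simp add: powr_realpow)
    also have "\<dots> = 2 powr (- real n / 2)" by (simp add: powr_powr)
    finally have q: "(2 powr (-1/2::real)) ^ n = 2 powr (- real n / 2)" .
    have c: "(2::real) powr (3 * real t / 2 - real n / 2) = 2 powr (3 * real t / 2) * 2 powr (- real n / 2)"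
      by (simp only: powr_add[symmetric]) simp
    show ?thesis by (simp only: c q)
  qed
  finally show ?thesis by (simp add: mult.assoc)
qed

lemma q_lt1: "(2::real) powr (-1/2) < 1" by (rule powr_less_one) auto

lemma gg_norm_summable:
  assumes z: "z \<in> ball 0 r0"
  shows "summable (\<lambda>n. norm (gg t z n))"
proof -
  obtain A where A: "A \<ge> 0" "\<forall>j. delta j t \<le> A * 2 powr (of_int j)" using delta_bound by blast
  have "summable (\<lambda>n. A * 2 powr (3 * real t / 2) * (2 powr (-1/2)) ^ n)"
    using q_lt1 by (intro summable_mult summable_geometric) auto
  thus ?thesis by (rule summable_comparison_test'[where N=0]) (use gg_bound[OF z A] in auto)
qed

lemma ff_big: "k > int t \<Longrightarrow> ff t z k = 0"
  by (simp add: ff_def delta_big)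

lemma ff_has_sum:
  assumes z: "z \<in> ball 0 r0"
  shows "(ff t z has_sum (\<Sum>n. gg t z n)) UNIV"
proof -
  have sg: "summable (gg t z)" using gg_norm_summable[OF z] summable_norm_cancel by blast
  have hs: "(gg t z has_sum (\<Sum>n. gg t z n)) UNIV"
    by (rule norm_summable_imp_has_sum[OF gg_norm_summable[OF z]]) (use sg in \<open>simp add: summable_sums\<close>)
  let ?h = "\<lambda>n::nat. int t - int n"
  have inj: "inj_on ?h UNIV" by (auto simp: inj_on_def)
  have "(ff t z has_sum (\<Sum>n. gg t z n)) (range ?h)"
  proof -
    have e: "ff t z \<circ> ?h = gg t z" by (auto simp: gg_def)
    show ?thesis using hs by (simp only: has_sum_reindex[OF inj] e)
  qed
  moreover have "range ?h = {k. k \<le> int t}"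
  proof (auto)
    fix k assume "k \<le> int t"
    hence "k = int t - int (nat (int t - k))" by simp
    thus "k \<in> range ?h" by blast
  qed
  ultimately have "(ff t z has_sum (\<Sum>n. gg t z n)) {k. k \<le> int t}" by simp
  thus ?thesis
    by (subst has_sum_cong_neutral[where g="ff t z" and T="{k. k \<le> int t}"]) (auto intro: ff_big)
qed

lemma charf_eq: "z \<in> ball 0 r0 \<Longrightarrow> charf t z = (\<Sum>n. gg t z n)"
  unfolding charf_ff by (rule infsumI[OF ff_has_sum])

lemma charf_has_sum: "z \<in> ball 0 r0 \<Longrightarrow> (ff t z has_sum charf t z) UNIV"
  using ff_has_sum charf_eq by simp



definition PP :: "nat \<Rightarrow> complex \<Rightarrow> complex" where
  "PP t \<zeta> = (\<Sum>n. complex_of_real (delta (int t - int n) t) * \<zeta> ^ n)"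

lemma PP_sums:
  assumes "\<zeta> \<in> ball 0 2"
  shows "(\<lambda>n. complex_of_real (delta (int t - int n) t) * (\<zeta> - 0) ^ n) sums PP t \<zeta>"
proof -
  obtain A where A: "A \<ge> 0" "\<forall>j. delta j t \<le> A * 2 powr (of_int j)" using delta_bound by blast
  have nz: "norm \<zeta> < 2" using assms by (simp add: dist_norm)
  have b: "norm (complex_of_real (delta (int t - int n) t) * \<zeta> ^ n) \<le> A * 2 ^ t * (norm \<zeta> / 2) ^ n" for n
  proof -
    have "norm (complex_of_real (delta (int t - int n) t) * \<zeta> ^ n) = delta (int t - int n) t * norm \<zeta> ^ n"
      by (simp add: norm_mult norm_power delta_nonneg)
    also have "\<dots> \<le> (A * 2 powr (of_int (int t - int n))) * norm \<zeta> ^ n"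
      using A(2)[rule_format, of "int t - int n"] by (intro mult_right_mono) auto
    also have "(2::real) powr (of_int (int t - int n)) = 2 ^ t / 2 ^ n"
      by (simp add: powr_diff powr_realpow)
    finally show ?thesis by (simp add: power_divide)
  qed
  have "summable (\<lambda>n. A * 2 ^ t * (norm \<zeta> / 2) ^ n)"
    using nz by (intro summable_mult summable_geometric) auto
  hence "summable (\<lambda>n. complex_of_real (delta (int t - int n) t) * \<zeta> ^ n)"
    by (rule summable_comparison_test'[where N=0]) (use b in auto)
  thus ?thesis unfolding PP_def by (simp add: summable_sums)
qed

lemma PP_holo: "PP t holomorphic_on ball 0 2"
  by (rule power_series_holomorphic) (rule PP_sums)

lemma exp_split: "exp (2 * pi * \<i> * of_int (int t - int n) * z) = exp (2 * pi * \<i> * of_nat t * z) * exp (- (2 * pi * \<i> * z)) ^ n"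
proof -
  have "2 * pi * \<i> * of_int (int t - int n) * z = 2 * pi * \<i> * of_nat t * z + of_nat n * (- (2 * pi * \<i> * z))"
    by (simp add: algebra_simps)
  thus ?thesis by (simp only: exp_add exp_of_nat_mult)
qed

lemma E_ball: "z \<in> ball 0 r0 \<Longrightarrow> exp (- (2 * pi * \<i> * z)) \<in> ball 0 2"
proof -
  assume z: "z \<in> ball 0 r0"
  have iz: "\<bar>Im z\<bar> \<le> r0" using z abs_Im_le_cmod[of z] by (simp add: dist_norm)
  have "norm (exp (- (2 * pi * \<i> * z))) = exp (2 * pi * Im z)" by simp
  also have "\<dots> \<le> exp (2 * pi * r0)" using iz pi_gt_zero by simp
  also have "\<dots> = 2 powr (1/2)" by (simp add: r0_def powr_def)
  also have "\<dots> < 2 powr 1" by (rule powr_less_mono) auto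
  finally show ?thesis by (simp add: dist_norm)
qed

lemma charf_PP: "z \<in> ball 0 r0 \<Longrightarrow> charf t z = exp (2 * pi * \<i> * of_nat t * z) * PP t (exp (- (2 * pi * \<i> * z)))"
proof -
  assume z: "z \<in> ball 0 r0"
  have "(\<lambda>n. complex_of_real (delta (int t - int n) t) * (exp (- (2 * pi * \<i> * z)) - 0) ^ n) sums PP t (exp (- (2 * pi * \<i> * z)))"
    by (rule PP_sums[OF E_ball[OF z]])
  hence "(\<lambda>n. exp (2 * pi * \<i> * of_nat t * z) * (complex_of_real (delta (int t - int n) t) * exp (- (2 * pi * \<i> * z)) ^ n))
      sums (exp (2 * pi * \<i> * of_nat t * z) * PP t (exp (- (2 * pi * \<i> * z))))"
    by (intro sums_mult) simp
  moreover have "(\<lambda>n. exp (2 * pi * \<i> * of_nat t * z) * (complex_of_real (delta (int t - int n) t) * exp (- (2 * pi * \<i> * z)) ^ n)) = gg t z"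
    unfolding gg_def ff_def exp_split by (rule ext) (simp add: mult_ac)
  ultimately show ?thesis using charf_eq[OF z] sums_unique by (metis)
qed

lemma charf_holo: "charf t holomorphic_on ball 0 r0"
proof -
  have "(PP t \<circ> (\<lambda>z. exp (- (2 * pi * \<i> * z)))) holomorphic_on ball 0 r0"
  proof (rule holomorphic_on_compose_gen[OF _ PP_holo])
    show "(\<lambda>z. exp (- (2 * pi * \<i> * z))) holomorphic_on ball 0 r0" by (intro holomorphic_intros)
    show "(\<lambda>z. exp (- (2 * pi * \<i> * z))) ` ball 0 r0 \<subseteq> ball 0 2" using E_ball by blast
  qed
  hence "(\<lambda>z. exp (2 * pi * \<i> * of_nat t * z) * PP t (exp (- (2 * pi * \<i> * z)))) holomorphic_on ball 0 r0"
    by (intro holomorphic_intros) (simp add: o_def)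
  thus ?thesis by (rule holomorphic_transform) (simp add: charf_PP)
qed


lemma charf_zero: "charf 0 z = 1"
proof -
  have "(ff 0 z has_sum 1) UNIV"
    by (rule has_sum_finite_neutralI[of "{0}"]) (auto simp: ff_def delta_zero)
  thus ?thesis unfolding charf_ff by (rule infsumI)
qed

lemma charf_even: "charf (2*u) = charf u"
  by (rule ext) (simp add: charf_def delta_even)

lemma exp_shift: "exp (c * z) * exp (2 * pi * \<i> * of_int (k + d) * z) = exp (2 * pi * \<i> * of_int k * z)"
  if "c = - 2 * pi * \<i> * of_int d" for c :: complex
proof -
  have "c * z + 2 * pi * \<i> * of_int (k + d) * z = 2 * pi * \<i> * of_int k * z"
    using that by (simp add: algebra_simps)
  thus ?thesis by (simp flip: exp_add)
qed

lemma has_sum_shift: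
  assumes "(f has_sum S) (UNIV :: int set)"
  shows "((\<lambda>k. f (k + d)) has_sum S) UNIV"
proof -
  have inj: "inj_on (\<lambda>k::int. k + d) UNIV" by (auto simp: inj_on_def)
  have r: "range (\<lambda>k::int. k + d) = UNIV"
    by (rule surjI[of _ "\<lambda>x. x - d"]) simp
  have "(f has_sum S) (range (\<lambda>k::int. k + d))" using assms r by simp
  thus ?thesis by (simp only: has_sum_reindex[OF inj] o_def)
qed

lemma charf_odd:
  assumes z: "z \<in> ball 0 r0"
  shows "2 * charf (2*u+1) z = exp (2 * pi * \<i> * z) * charf u z + exp (- (2 * pi * \<i> * z)) * charf (u+1) z"
proof -
  let ?e1 = "exp (2 * pi * \<i> * z)" and ?e2 = "exp (- (2 * pi * \<i> * z))"
  have h1: "((\<lambda>k. ?e1 * ff u z (k + (-1))) has_sum ?e1 * charf u z) UNIV"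
    by (intro has_sum_cmult_right has_sum_shift charf_has_sum z)
  have h2: "((\<lambda>k. ?e2 * ff (u+1) z (k + 1)) has_sum ?e2 * charf (u+1) z) UNIV"
    by (intro has_sum_cmult_right has_sum_shift charf_has_sum z)
  have h: "((\<lambda>k. ?e1 * ff u z (k + (-1)) + ?e2 * ff (u+1) z (k + 1)) has_sum (?e1 * charf u z + ?e2 * charf (u+1) z)) UNIV"
    by (rule has_sum_add[OF h1 h2])
  have eq: "?e1 * ff u z (k + (-1)) + ?e2 * ff (u+1) z (k + 1) = 2 * ff (2*u+1) z k" for k
  proof -
    have a: "?e1 * exp (2 * pi * \<i> * of_int (k + (-1)) * z) = exp (2 * pi * \<i> * of_int k * z)"
      using exp_shift[of "2 * pi * \<i>" "-1" z k] by simp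
    have b: "?e2 * exp (2 * pi * \<i> * of_int (k + 1) * z) = exp (2 * pi * \<i> * of_int k * z)"
      using exp_shift[of "- (2 * pi * \<i>)" 1 z k] by simp
    have "?e1 * ff u z (k + (-1)) + ?e2 * ff (u+1) z (k + 1)
        = complex_of_real (delta (k + (-1)) u) * (?e1 * exp (2 * pi * \<i> * of_int (k + (-1)) * z))
        + complex_of_real (delta (k + 1) (u+1)) * (?e2 * exp (2 * pi * \<i> * of_int (k + 1) * z))"
      by (simp add: ff_def mult_ac)
    also have "\<dots> = complex_of_real (delta (k - 1) u + delta (k + 1) (u+1)) * exp (2 * pi * \<i> * of_int k * z)"
      unfolding a b by (simp add: algebra_simps)
    also have "\<dots> = 2 * ff (2*u+1) z k"
    proof -
      have d: "delta k (2*u+1) = (delta (k-1) u + delta (k+1) (u+1)) / 2" by (rule delta_odd)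
      show ?thesis unfolding ff_def d by simp
    qed
    finally show ?thesis .
  qed
  have "((\<lambda>k. 2 * ff (2*u+1) z k) has_sum (?e1 * charf u z + ?e2 * charf (u+1) z)) UNIV"
    using h unfolding eq .
  hence "((\<lambda>k. (1/2) * (2 * ff (2*u+1) z k)) has_sum (1/2) * (?e1 * charf u z + ?e2 * charf (u+1) z)) UNIV"
    by (rule has_sum_cmult_right)
  hence "(ff (2*u+1) z has_sum (1/2) * (?e1 * charf u z + ?e2 * charf (u+1) z)) UNIV" by simp
  hence "charf (2*u+1) z = (1/2) * (?e1 * charf u z + ?e2 * charf (u+1) z)"
    unfolding charf_ff by (rule infsumI)
  thus ?thesis by (simp add: mult.commute)
qed


lemma ln_deriv_rec:
  assumes holF: "F holomorphic_on S" and S: "open S" "0 \<in> S" and F0: "F 0 = 1"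
  shows "(deriv ^^ Suc n) F 0 = (\<Sum>i = 0..n. of_nat (n choose i) * (deriv ^^ Suc i) (\<lambda>z. Ln (F z)) 0 * (deriv ^^ (n - i)) F 0)"
proof -
  define U where "U = S \<inter> F -` ball 1 1"
  have U: "open U" unfolding U_def
    by (rule continuous_open_preimage[OF holomorphic_on_imp_continuous_on[OF holF] S(1)]) simp
  have U0: "0 \<in> U" using S F0 by (simp add: U_def)
  have US: "U \<subseteq> S" by (auto simp: U_def)
  have nr: "F z \<notin> \<real>\<^sub>\<le>\<^sub>0" if "z \<in> U" for z
  proof -
    have "dist 1 (F z) < 1" using that by (simp add: U_def)
    hence "\<bar>Re (1 - F z)\<bar> < 1" using abs_Re_le_cmod[of "1 - F z"] by (simp add: dist_norm)
    hence "Re (F z) > 0" by simp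
    thus ?thesis by (simp add: complex_nonpos_Reals_iff)
  qed
  have FU: "F holomorphic_on U" using holF US holomorphic_on_subset by blast
  define L where "L = (\<lambda>z. Ln (F z))"
  have LU: "L holomorphic_on U" unfolding L_def by (intro holomorphic_intros FU nr)
  have dL: "deriv F z = deriv L z * F z" if z: "z \<in> U" for z
  proof -
    have "(F has_field_derivative deriv F z) (at z)" using holomorphic_derivI[OF FU U z] .
    hence "(L has_field_derivative inverse (F z) * deriv F z) (at z)"
      unfolding L_def by (rule DERIV_chain2[where f=Ln and g=F, OF has_field_derivative_Ln[OF nr[OF z]]])
    hence "deriv L z = inverse (F z) * deriv F z" by (rule DERIV_imp_deriv)
    moreover have "F z \<noteq> 0" using nr[OF z] by auto
    ultimately show ?thesis by (simp add: field_simps)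
  qed
  have "(deriv ^^ Suc n) F 0 = (deriv ^^ n) (deriv F) 0" by (simp only: funpow_Suc_right o_def)
  also have "\<dots> = (deriv ^^ n) (\<lambda>z. deriv L z * F z) 0"
    by (rule higher_deriv_cong_ev[OF _ refl]) (use eventually_nhds_in_open[OF U U0] dL in \<open>auto elim!: eventually_mono\<close>)
  also have "\<dots> = (\<Sum>i = 0..n. of_nat (n choose i) * (deriv ^^ i) (deriv L) 0 * (deriv ^^ (n - i)) F 0)"
    by (rule higher_deriv_mult[OF holomorphic_deriv[OF LU U] FU U U0])
  also have "\<dots> = (\<Sum>i = 0..n. of_nat (n choose i) * (deriv ^^ Suc i) L 0 * (deriv ^^ (n - i)) F 0)"
    by (simp only: funpow_Suc_right o_def)
  finally show ?thesis unfolding L_def .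
qed

lemma ln_derivs:
  assumes holF: "F holomorphic_on S" and S: "open S" "0 \<in> S" and F0: "F 0 = 1" and F1: "deriv F 0 = 0"
  shows "(deriv ^^ 2) (\<lambda>z. Ln (F z)) 0 = (deriv ^^ 2) F 0"
    and "(deriv ^^ 3) (\<lambda>z. Ln (F z)) 0 = (deriv ^^ 3) F 0"
proof -
  note r = ln_deriv_rec[OF holF S F0]
  have f1: "(deriv ^^ Suc 0) F 0 = 0" using F1 by simp
  have l1: "(deriv ^^ Suc 0) (\<lambda>z. Ln (F z)) 0 = 0" using r[of 0] f1 F0 by simp
  have a: "(deriv ^^ Suc (Suc 0)) F 0 = (deriv ^^ Suc (Suc 0)) (\<lambda>z. Ln (F z)) 0"
    using r[of "Suc 0"] f1 F0 l1 by simp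
  have b: "(deriv ^^ Suc (Suc (Suc 0))) F 0 = (deriv ^^ Suc (Suc (Suc 0))) (\<lambda>z. Ln (F z)) 0"
    using r[of "Suc (Suc 0)"] f1 F0 l1 by (simp add: numeral_2_eq_2)
  show "(deriv ^^ 2) (\<lambda>z. Ln (F z)) 0 = (deriv ^^ 2) F 0" using a by (simp add: numeral_2_eq_2)
  show "(deriv ^^ 3) (\<lambda>z. Ln (F z)) 0 = (deriv ^^ 3) F 0" using b by (simp add: numeral_3_eq_3)
qed


lemma hd_exp: "(deriv ^^ n) (\<lambda>z. exp (c * z)) z = c ^ n * exp (c * z)"
proof (induction n arbitrary: z)
  case 0 show ?case by simp
next
  case (Suc n)
  have e: "(deriv ^^ n) (\<lambda>z. exp (c * z)) = (\<lambda>z. c ^ n * exp (c * z))" using Suc by (simp add: fun_eq_iff)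
  have "((\<lambda>z. c ^ n * exp (c * z)) has_field_derivative c ^ n * (exp (c * z) * c)) (at z)"
    by (auto intro!: derivative_eq_intros)
  hence "deriv (\<lambda>z. c ^ n * exp (c * z)) z = c ^ n * (exp (c * z) * c)" by (rule DERIV_imp_deriv)
  thus ?case by (simp add: e)
qed

lemma hd_exp_neg: "(deriv ^^ i) (\<lambda>z. exp (- (2 * complex_of_real pi * \<i> * z))) 0 = (- (2 * complex_of_real pi * \<i>)) ^ i"
  using hd_exp[of i "- (2 * complex_of_real pi * \<i>)" 0] by simp

definition dd :: "nat \<Rightarrow> nat \<Rightarrow> complex" where "dd n t = (deriv ^^ n) (charf t) 0"

lemma ball0: "open (ball (0::complex) r0)" "(0::complex) \<in> ball 0 r0" using r0_pos by auto

lemma odd_deriv: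
  "2 * dd n (2*u+1) = (\<Sum>i = 0..n. of_nat (n choose i) * (2*pi*\<i>) ^ i * dd (n - i) u)
     + (\<Sum>i = 0..n. of_nat (n choose i) * (-(2*pi*\<i>)) ^ i * dd (n - i) (u+1))"
proof -
  let ?w = "2*pi*\<i> :: complex"
  have h1: "(\<lambda>z. exp (?w * z) * charf u z) holomorphic_on ball 0 r0"
    by (intro holomorphic_intros charf_holo)
  have h2: "(\<lambda>z. exp ((- ?w) * z) * charf (u+1) z) holomorphic_on ball 0 r0"
    by (intro holomorphic_intros charf_holo)
  have "2 * dd n (2*u+1) = (deriv ^^ n) (\<lambda>z. 2 * charf (2*u+1) z) 0"
    unfolding dd_def by (rule higher_deriv_cmult[OF charf_holo ball0(2) ball0(1), symmetric])
  also have "\<dots> = (deriv ^^ n) (\<lambda>z. exp (?w * z) * charf u z + exp ((- ?w) * z) * charf (u+1) z) 0"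
  proof (rule higher_deriv_cong_ev[OF _ refl])
    show "eventually (\<lambda>z. 2 * charf (2*u+1) z = exp (?w * z) * charf u z + exp ((- ?w) * z) * charf (u+1) z) (nhds 0)"
      using eventually_nhds_in_open[OF ball0] by (rule eventually_mono) (use charf_odd[of _ u] in simp)
  qed
  also have "\<dots> = (deriv ^^ n) (\<lambda>z. exp (?w * z) * charf u z) 0 + (deriv ^^ n) (\<lambda>z. exp ((- ?w) * z) * charf (u+1) z) 0"
    by (rule higher_deriv_add[OF h1 h2 ball0])
  also have "(deriv ^^ n) (\<lambda>z. exp (?w * z) * charf u z) 0 = (\<Sum>i = 0..n. of_nat (n choose i) * ?w ^ i * dd (n - i) u)"
    by (subst higher_deriv_mult[OF _ charf_holo ball0]) (auto intro!: holomorphic_intros simp: hd_exp dd_def)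
  also have "(deriv ^^ n) (\<lambda>z. exp ((- ?w) * z) * charf (u+1) z) 0 = (\<Sum>i = 0..n. of_nat (n choose i) * (- ?w) ^ i * dd (n - i) (u+1))"
    by (subst higher_deriv_mult[OF _ charf_holo ball0]) (auto intro!: holomorphic_intros simp: hd_exp_neg dd_def)
  finally show ?thesis .
qed

lemma w_nz: "(2*pi*\<i> :: complex) \<noteq> 0" by simp

lemma dd_even: "dd n (2*u) = dd n u" by (simp add: dd_def charf_even)

lemma dd01: "dd 0 t = 1 \<and> dd 1 t = 0"
proof (induction t rule: less_induct)
  case (less t)
  let ?w = "2*pi*\<i> :: complex"
  show ?case
  proof (cases "t = 0")
    case True
    have "charf 0 = (\<lambda>z. 1)" by (simp add: fun_eq_iff charf_zero)
    thus ?thesis using True by (simp add: dd_def)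
  next
    case t0: False
    show ?thesis
    proof (cases "even t")
      case True then obtain u where u: "t = 2*u" by blast
      with t0 have "u < t" by simp
      thus ?thesis using less u by (simp add: dd_even)
    next
      case False then obtain u where u: "t = 2*u+1" by (metis oddE)
      have e0: "2 * dd 0 t = dd 0 u + dd 0 (u+1)" using odd_deriv[of 0 u] u by simp
      have e1: "2 * dd 1 t = dd 1 u + ?w * dd 0 u + dd 1 (u+1) - ?w * dd 0 (u+1)"
        using odd_deriv[of 1 u] u by simp
      show ?thesis
      proof (cases "u = 0")
        case True
        have z: "dd 0 0 = 1" "dd 1 0 = 0" using less[of 0] t0 by auto
        have a: "dd 0 t = 1" using e0 True z u by simp
        have "dd 1 t = 0" using e1 True z u a by simp
        with a show ?thesis by simp
      next
        case False
        with u have "u < t" "u+1 < t" by auto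
        hence "dd 0 u = 1" "dd 1 u = 0" "dd 0 (u+1) = 1" "dd 1 (u+1) = 0" using less by auto
        thus ?thesis using e0 e1 by simp
      qed
    qed
  qed
qed

lemma dd2_odd: "2 * dd 2 (2*u+1) = dd 2 u + dd 2 (u+1) + 2 * (2*pi*\<i>)^2"
proof -
  have "2 * dd 2 (2*u+1) = dd 2 u + 2 * (2*pi*\<i>) * dd 1 u + (2*pi*\<i>)^2 * dd 0 u
      + (dd 2 (u+1) - 2 * (2*pi*\<i>) * dd 1 (u+1) + (2*pi*\<i>)^2 * dd 0 (u+1))"
    using odd_deriv[of 2 u] by (simp add: numeral_2_eq_2 algebra_simps)
  thus ?thesis using dd01[of u] dd01[of "u+1"] by simp
qed

lemma dd3_odd: "2 * dd 3 (2*u+1) = dd 3 u + dd 3 (u+1) + 3 * (2*pi*\<i>) * (dd 2 u - dd 2 (u+1))"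
proof -
  have "2 * dd 3 (2*u+1) = dd 3 u + 3 * (2*pi*\<i>) * dd 2 u + 3 * (2*pi*\<i>)^2 * dd 1 u + (2*pi*\<i>)^3 * dd 0 u
      + (dd 3 (u+1) - 3 * (2*pi*\<i>) * dd 2 (u+1) + 3 * (2*pi*\<i>)^2 * dd 1 (u+1) - (2*pi*\<i>)^3 * dd 0 (u+1))"
    using odd_deriv[of 3 u] by (simp add: numeral_3_eq_3 numeral_2_eq_2 algebra_simps)
  thus ?thesis using dd01[of u] dd01[of "u+1"] by (simp add: algebra_simps)
qed

lemma kappa_dd: "kappa 2 t = dd 2 t / (2*pi*\<i>)^2" "kappa 3 t = dd 3 t / (2*pi*\<i>)^3"
proof -
  have F0: "charf t 0 = 1" using dd01[of t] by (simp add: dd_def)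
  have F1: "deriv (charf t) 0 = 0" using dd01[of t] by (simp add: dd_def)
  note l = ln_derivs[OF charf_holo ball0(1) ball0(2) F0 F1]
  show "kappa 2 t = dd 2 t / (2*pi*\<i>)^2" by (simp add: kappa_def l dd_def)
  show "kappa 3 t = dd 3 t / (2*pi*\<i>)^3" by (simp add: kappa_def l dd_def)
qed


lemma K_even: "kappa 2 (2*u) = kappa 2 u" "kappa 3 (2*u) = kappa 3 u"
  by (simp_all add: kappa_dd dd_even)

lemma K_pow: "kappa 2 (2^k * m) = kappa 2 m \<and> kappa 3 (2^k * m) = kappa 3 m"
proof (induction k)
  case 0 show ?case by simp
next
  case (Suc k)
  have "2^(Suc k) * m = 2 * (2^k * m)" by simp
  thus ?case using Suc K_even by metis
qed

lemma K_odd: "kappa 2 (2*u+1) = (kappa 2 u + kappa 2 (u+1)) / 2 + 1"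
proof -
  have w: "(2*pi*\<i> :: complex)^2 \<noteq> 0" by simp
  have "dd 2 (2*u+1) = (dd 2 u + dd 2 (u+1)) / 2 + (2*pi*\<i>)^2"
    using dd2_odd[of u] by (simp add: field_simps)
  thus ?thesis using w by (simp add: kappa_dd field_simps)
qed

lemma alg3: "(w::complex) \<noteq> 0 \<Longrightarrow> ((A + B) / 2 + 3/2 * w * (C - E)) / w^3 = (A / w^3 + B / w^3) / 2 + 3/2 * (C / w^2 - E / w^2)"
  by (simp add: field_simps power2_eq_square power3_eq_cube)

lemma M_odd: "kappa 3 (2*u+1) = (kappa 3 u + kappa 3 (u+1)) / 2 + 3/2 * (kappa 2 u - kappa 2 (u+1))"
proof -
  let ?w = "2*pi*\<i> :: complex"
  have w: "?w \<noteq> 0" by simp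
  have "dd 3 (2*u+1) = (dd 3 u + dd 3 (u+1)) / 2 + 3/2 * ?w * (dd 2 u - dd 2 (u+1))"
    using dd3_odd[of u] by (simp add: field_simps)
  hence "dd 3 (2*u+1) / ?w^3 = ((dd 3 u + dd 3 (u+1)) / 2 + 3/2 * ?w * (dd 2 u - dd 2 (u+1))) / ?w^3"
    by simp
  also have "\<dots> = (dd 3 u / ?w^3 + dd 3 (u+1) / ?w^3) / 2 + 3/2 * (dd 2 u / ?w^2 - dd 2 (u+1) / ?w^2)"
    by (rule alg3[OF w])
  finally have "dd 3 (2*u+1) / ?w^3 = (dd 3 u / ?w^3 + dd 3 (u+1) / ?w^3) / 2 + 3/2 * (dd 2 u / ?w^2 - dd 2 (u+1) / ?w^2)" .
  thus ?thesis by (simp add: kappa_dd)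
qed

lemma algK: fixes X a b :: complex assumes "X \<noteq> 0"
  shows "((X+1)*a/(2*X) + (X-1)*b/(2*X) + 3*(X-1)/X + (a+b)/2 + 1)/2 + 1 = (2*X+1)*a/(4*X) + (2*X-1)*b/(4*X) + 3*(2*X-1)/(2*X)"
  using assms by (simp add: field_simps)

lemma algD: fixes X a b Ma Mb M kk :: complex assumes X: "X \<noteq> 0"
 and D: "KT - M/3 = (X+1)/(2*X)*(a - Ma/3) + (X-1)/(2*X)*(b - Mb/3) + (1/2 + (kk-1)/(2*X))*(b-a) + 1 + (3*kk-1)/X"
 and K: "KT = (X+1)*a/(2*X) + (X-1)*b/(2*X) + 3*(X-1)/X"
 shows "((KT + (a+b)/2+1)/2+1) - ((M + (Ma+Mb)/2 + 3/2*(a-b))/2 + 3/2*(KT - ((a+b)/2+1)))/3 = (2*X+1)/(4*X)*(a-Ma/3) + (2*X-1)/(4*X)*(b - Mb/3) + (1/2 + ((1+kk)-1)/(4*X))*(b-a) + 1 + (3*(1+kk)-1)/(2*X)"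
proof -
  have M: "M = 3 * (KT - ((X+1)/(2*X)*(a - Ma/3) + (X-1)/(2*X)*(b - Mb/3) + (1/2 + (kk-1)/(2*X))*(b-a) + 1 + (3*kk-1)/X))"
    using D by (simp add: field_simps)
  show ?thesis unfolding M K using X by (simp add: field_simps)
qed

theorem lemma2p10:
  fixes t k :: nat
  shows "(kappa 2 (2^(k+1) * t + 2^k - 1) =
           (2^k + 1) * kappa 2 t / 2^(k+1) + (2^k - 1) * kappa 2 (t+1) / 2^(k+1)
           + 3 * (2^k - 1) / 2^k) \<and>
         (D (2^(k+1) * t + 2^k - 1) =
           (2^k + 1) / 2^(k+1) * D t + (2^k - 1) / 2^(k+1) * D (t+1)
           + (1/2 + (of_nat k - 1) / 2^(k+1)) * (kappa 2 (t+1) - kappa 2 t)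
           + 1 + (3 * of_nat k - 1) / 2^k)"
proof (induction k)
  case 0
  have "2^(0+1) * t + 2^0 - 1 = 2 * t" by simp
  thus ?case using K_even[of t] by (simp add: D_def)
next
  case (Suc k)
  define T where "T = 2^(k+1) * t + 2^k - (1::nat)"
  obtain q :: nat where q: "2^k = q + 1" by (metis add.commute one_le_numeral one_le_power le_Suc_ex)
  have T1: "2^(Suc k + 1) * t + 2^(Suc k) - 1 = 2 * T + 1" unfolding T_def using q by simp
  have T2: "T + 1 = 2^k * (2*t+1)" unfolding T_def using q by (simp add: algebra_simps)
  define a where "a = kappa 2 t"
  define b where "b = kappa 2 (t+1)"
  define Ma where "Ma = kappa 3 t"
  define Mb where "Mb = kappa 3 (t+1)"
  have c: "kappa 2 (T+1) = (a + b) / 2 + 1" using K_pow[of k "2*t+1"] K_odd[of t] T2 by (simp add: a_def b_def)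
  have Mc: "kappa 3 (T+1) = (Ma + Mb) / 2 + 3/2 * (a - b)" using K_pow[of k "2*t+1"] M_odd[of t] T2
    by (simp add: a_def b_def Ma_def Mb_def)
  define X where "X = (2::complex)^k"
  have X: "X \<noteq> 0" by (simp add: X_def)
  have IH1: "kappa 2 T = (X + 1) * a / (2*X) + (X - 1) * b / (2*X) + 3 * (X - 1) / X"
    using Suc.IH[THEN conjunct1] unfolding T_def a_def b_def X_def by simp
  have IH2: "kappa 2 T - kappa 3 T / 3 = (X + 1) / (2*X) * (a - Ma/3) + (X - 1) / (2*X) * (b - Mb/3)
           + (1/2 + (of_nat k - 1) / (2*X)) * (b - a) + 1 + (3 * of_nat k - 1) / X"
    using Suc.IH[THEN conjunct2] unfolding T_def a_def b_def Ma_def Mb_def X_def D_def by simp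
  have KT: "kappa 2 (2*T+1) = (kappa 2 T + (a + b) / 2 + 1) / 2 + 1" using K_odd[of T] c by simp
  have MT: "kappa 3 (2*T+1) = (kappa 3 T + (Ma + Mb) / 2 + 3/2 * (a - b)) / 2 + 3/2 * (kappa 2 T - ((a + b) / 2 + 1))"
    using M_odd[of T] c Mc by simp
  have P1: "(2::complex)^(Suc k + 1) = 4 * X" "(2::complex)^(Suc k) = 2 * X" by (simp_all add: X_def)
  have G1: "kappa 2 (2*T+1) = (2*X+1)*a/(4*X) + (2*X-1)*b/(4*X) + 3*(2*X-1)/(2*X)"
    unfolding KT IH1 using algK[OF X] .
  have G2: "kappa 2 (2*T+1) - kappa 3 (2*T+1)/3 = (2*X+1)/(4*X)*(a-Ma/3) + (2*X-1)/(4*X)*(b - Mb/3) + (1/2 + ((1 + of_nat k)-1)/(4*X))*(b-a) + 1 + (3*(1 + of_nat k)-1)/(2*X)"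
    unfolding KT MT by (rule algD[OF X IH2 IH1])
  show ?case
    unfolding T1 D_def P1 of_nat_Suc a_def[symmetric] b_def[symmetric] Ma_def[symmetric] Mb_def[symmetric]
    using G1 G2 by simp
qed


end
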